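(* Let $M,N,d$ be positive integers with $d>N$. For $i=1,\dots,M$ let $X_i\in\mathbb{R}^{N\times d}$ have full row rank $N$, let $w_i^*\in\mathbb{R}^d$, $z_i\in\mathbb{R}^N$, and $y_i = X_i w_i^* + z_i\in\mathbb{R}^N$. Consider Local-GD for linear regression: given $w_0^0\in\mathbb{R}^d$, for $k=0,1,2,\dots$ each node $i$ runs gradient descent $w\mapsto w-\eta\nabla f_i(w)$ on $f_i(w)=\frac{1}{2N}\|y_i-X_iw\|^2$ initialized at $w_0^k$, with a constant step size $\eta$ small enough for convergence, until convergence, and sets $w_i^{k+1}$ to be the limit of these iterates; then $w_0^{k+1}=\frac1M\sum_{i=1}^M w_i^{k+1}$. Let $P_i=X_i^T(X_iX_i^T)^{-1}X_i$, $X_i^{\dagger}=X_i^T(X_iX_i^T)^{-1}$, $\bar P=\frac1M\sum_{i=1}^M P_i$, $\bar Q=\frac1M\sum_{i=1}^M P_iw_i^*$, $\bar Z=\frac1M\sum_{i=1}^M X_i^{\dagger}z_i$. Then for every $K\ge 0$, $$w_0^K=(I-\bar P)^K w_0^0+\sum_{k=0}^{K-1}(I-\bar P)^k(\bar Q+\bar Z).$$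
   Context: This is the distributed setting with $M$ compute nodes, node $i$ holding the data matrix $X_i$ (rows are samples) and label vector $y_i$; "local models are exactly solved" means each local gradient descent is run to convergence in every communication round. $I$ denotes the $d\times d$ identity. *)

theory Defs
  imports "HOL-Analysis.Analysis"
begin

definition loss :: "real^'d^'n \<Rightarrow> real^'n \<Rightarrow> real^'d \<Rightarrow> real" where
  "loss X y w = (1 / (2 * real CARD('n))) * (norm (y - X *v w))^2"

definition grad :: "(real^'d \<Rightarrow> real) \<Rightarrow> real^'d \<Rightarrow> real^'d" where
  "grad f w = (THE D. GDERIV f w :> D)"

definition gd_step :: "real \<Rightarrow> (real^'d \<Rightarrow> real) \<Rightarrow> real^'d \<Rightarrow> real^'d" where
  "gd_step eta f w = w - eta *\<^sub>R grad f w"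

definition gd_limit :: "real \<Rightarrow> (real^'d \<Rightarrow> real) \<Rightarrow> real^'d \<Rightarrow> real^'d" where
  "gd_limit eta f w = lim (\<lambda>t. (gd_step eta f ^^ t) w)"

primrec local_gd :: "nat \<Rightarrow> real \<Rightarrow> (nat \<Rightarrow> real^'d^'n) \<Rightarrow> (nat \<Rightarrow> real^'n)
                      \<Rightarrow> real^'d \<Rightarrow> nat \<Rightarrow> real^'d" where
  "local_gd M eta X y w00 0 = w00"
| "local_gd M eta X y w00 (Suc k) =
     (1 / real M) *\<^sub>R (\<Sum>i<M. gd_limit eta (loss (X i) (y i)) (local_gd M eta X y w00 k))"

primrec matpow :: "real^'d^'d \<Rightarrow> nat \<Rightarrow> real^'d^'d" where
  "matpow A 0 = mat 1"
| "matpow A (Suc k) = A ** matpow A k"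

end

theory Submission
  imports Defs
begin

lemma grad_loss:
  fixes X :: "real^'d^'n" and y :: "real^'n"
  shows "grad (loss X y) w = (1 / real CARD('n)) *\<^sub>R (transpose X *v (X *v w - y))"
proof -
  let ?c = "1 / (2 * real CARD('n))"
  let ?D = "(1 / real CARD('n)) *\<^sub>R (transpose X *v (X *v w - y))"
  have eq: "loss X y = (\<lambda>w. ?c * inner (y - X *v w) (y - X *v w))"
    by (auto simp: loss_def power2_norm_eq_inner fun_eq_iff)
  have d: "(loss X y has_derivative (\<lambda>h. inner h ?D)) (at w)"
  proof -
    have lin: "((\<lambda>w. X *v w) has_derivative (\<lambda>h. X *v h)) (at w)"
      by (rule bounded_linear.has_derivative[OF matrix_vector_mul_bounded_linear has_derivative_ident])
    have r: "((\<lambda>w. y - X *v w) has_derivative (\<lambda>h. 0 - X *v h)) (at w)"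
      by (rule has_derivative_diff[OF has_derivative_const lin])
    have i: "((\<lambda>w. inner (y - X *v w) (y - X *v w)) has_derivative
        (\<lambda>h. inner (y - X *v w) (0 - X *v h) + inner (0 - X *v h) (y - X *v w))) (at w)"
      by (rule has_derivative_inner[OF r r])
    have m: "((\<lambda>w. ?c * inner (y - X *v w) (y - X *v w)) has_derivative
        (\<lambda>h. ?c * (inner (y - X *v w) (0 - X *v h) + inner (0 - X *v h) (y - X *v w)))) (at w)"
      by (rule has_derivative_mult_right[OF i])
    show ?thesis unfolding eq
      apply (rule has_derivative_eq_rhs[OF m])
    proof
      fix h
      have 1: "inner h (transpose X *v (X *v w - y)) = inner (X *v w - y) (X *v h)"
        by (metis dot_lmul_matrix inner_commute transpose_matrix_vector)
      have 2: "inner (0 - X *v h) (y - X *v w) = inner (y - X *v w) (0 - X *v h)"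
        by (rule inner_commute)
      show "?c * (inner (y - X *v w) (0 - X *v h) + inner (0 - X *v h) (y - X *v w)) = inner h ?D"
        unfolding 2 inner_scaleR_right 1
        by (simp add: inner_diff_left inner_diff_right field_simps)
    qed
  qed
  show ?thesis unfolding grad_def
  proof (rule the_equality)
    show "GDERIV (loss X y) w :> ?D" using d by (simp add: gderiv_def)
  next
    fix D assume "GDERIV (loss X y) w :> D"
    hence "(loss X y has_derivative (\<lambda>h. inner h D)) (at w)" by (simp add: gderiv_def)
    from has_derivative_unique[OF this d] have "(\<lambda>h. inner h D) = (\<lambda>h. inner h ?D)" .
    hence "inner (D - ?D) D = inner (D - ?D) ?D" by metis
    hence "inner (D - ?D) (D - ?D) = 0" by (simp add: inner_diff_right)
    thus "D = ?D" by simp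
  qed
qed

lemma gram_inv:
  fixes X :: "real^'d^'n"
  assumes inj: "inj ((*v) (transpose X))"
  shows "matrix_inv (X ** transpose X) ** (X ** transpose X) = mat 1"
    "(X ** transpose X) ** matrix_inv (X ** transpose X) = mat 1"
proof -
  let ?G = "X ** transpose X"
  have "\<forall>v. ?G *v v = 0 \<longrightarrow> v = 0"
  proof (intro allI impI)
    fix v assume "?G *v v = 0"
    hence "inner v (X *v (transpose X *v v)) = 0" by (metis matrix_vector_mul_assoc inner_zero_right)
    hence "inner (transpose X *v v) (transpose X *v v) = 0"
      by (metis dot_lmul_matrix transpose_matrix_vector)
    hence "transpose X *v v = transpose X *v 0" by simp
    thus "v = 0" using inj by (meson injD)
  qed
  hence "\<exists>B. B ** ?G = mat 1" by (simp add: matrix_left_invertible_ker)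
  hence "invertible ?G" by (simp add: invertible_left_inverse)
  hence "\<exists>A'. ?G ** A' = mat 1 \<and> A' ** ?G = mat 1" by (simp add: invertible_def)
  hence "?G ** matrix_inv ?G = mat 1 \<and> matrix_inv ?G ** ?G = mat 1"
    unfolding matrix_inv_def by (rule someI_ex)
  thus "matrix_inv ?G ** ?G = mat 1" "?G ** matrix_inv ?G = mat 1" by auto
qed

lemma gd_limit_eq:
  fixes X :: "real^'d^'n" and y :: "real^'n"
  assumes inj: "inj ((*v) (transpose X))" and eta: "eta > 0"
    and conv: "convergent (\<lambda>t. (gd_step eta (loss X y) ^^ t) w)"
  shows "gd_limit eta (loss X y) w = w + transpose X *v (matrix_inv (X ** transpose X) *v (y - X *v w))"
proof -
  define c where "c = eta / real CARD('n)"
  have c0: "c \<noteq> 0" using eta by (simp add: c_def)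
  define g where "g = gd_step eta (loss X y)"
  have g: "g v = v - c *\<^sub>R (transpose X *v (X *v v - y))" for v
    by (simp add: g_def gd_step_def grad_loss c_def)
  define s where "s t = (g ^^ t) w" for t
  have sS: "s (Suc t) = g (s t)" for t by (simp add: s_def)
  define S where "S = range (\<lambda>a. transpose X *v a)"
  have subS: "subspace S" unfolding S_def
    using linear_subspace_image[OF matrix_vector_mul_linear subspace_UNIV, of "transpose X"] by simp
  have inS: "s t - w \<in> S" for t
  proof (induction t)
    case 0 show ?case by (simp add: s_def subspace_0[OF subS])
  next
    case (Suc t)
    have e: "s (Suc t) - w = (s t - w) - c *\<^sub>R (transpose X *v (X *v s t - y))"
      by (simp add: sS g)
    have T: "transpose X *v (X *v s t - y) \<in> S" unfolding S_def by (rule rangeI)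
    show ?case
      by (subst e) (rule subspace_diff[OF subS Suc subspace_scale[OF subS T]])
  qed
  define L where "L = lim s"
  have lim: "s \<longlonglongrightarrow> L" using conv unfolding L_def s_def g_def convergent_LIMSEQ_iff .
  have "L - w \<in> S"
    by (rule closed_sequentially[OF closed_subspace[OF subS] inS tendsto_diff[OF lim tendsto_const]])
  then obtain a where a: "L - w = transpose X *v a" by (auto simp: S_def)
  have "(\<lambda>t. g (s t)) \<longlonglongrightarrow> g L" unfolding g
    by (intro tendsto_intros bounded_linear.tendsto[OF matrix_vector_mul_bounded_linear] lim)
  moreover have "(\<lambda>t. g (s t)) \<longlonglongrightarrow> L" using LIMSEQ_Suc[OF lim] by (simp add: sS)
  ultimately have "g L = L" by (rule LIMSEQ_unique)
  hence "c *\<^sub>R (transpose X *v (X *v L - y)) = 0" using g[of L] by simp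
  hence "transpose X *v (X *v L - y) = transpose X *v 0" using c0 by simp
  hence "X *v L - y = 0" using inj by (meson injD)
  hence "(X ** transpose X) *v a = y - X *v w"
    using a by (simp add: matrix_vector_mul_assoc[symmetric] algebra_simps eq_diff_eq)
  hence "matrix_inv (X ** transpose X) *v ((X ** transpose X) *v a) = matrix_inv (X ** transpose X) *v (y - X *v w)"
    by simp
  hence "a = matrix_inv (X ** transpose X) *v (y - X *v w)"
    by (simp add: matrix_vector_mul_assoc gram_inv[OF inj])
  moreover have "gd_limit eta (loss X y) w = L" unfolding gd_limit_def L_def
    by (rule arg_cong[where f=lim]) (simp add: fun_eq_iff s_def g_def)
  ultimately show ?thesis using a by (metis add.commute diff_add_cancel)
qed

lemma sum_mv: "(\<Sum>i<n. F i) *v (v::real^'a) = (\<Sum>i<n. F i *v v)"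
  for F :: "nat \<Rightarrow> real^'a^'b"
  by (induction n) (simp_all add: matrix_vector_mult_add_rdistrib)

lemma mv_sum: "(A::real^'a^'b) *v (\<Sum>i<(n::nat). f i) = (\<Sum>i<n. A *v f i)"
  by (induction n) (simp_all add: matrix_vector_right_distrib)

lemma step_eq:
  fixes X :: "real^'d^'n"
  assumes "rank X = CARD('n)" "y = X *v ws + z" "eta > 0"
    "convergent (\<lambda>t. (gd_step eta (loss X y) ^^ t) w)"
  shows "gd_limit eta (loss X y) w = w - (transpose X ** matrix_inv (X ** transpose X) ** X) *v w
     + (transpose X ** matrix_inv (X ** transpose X) ** X) *v ws + (transpose X ** matrix_inv (X ** transpose X)) *v z"
proof -
  have inj: "inj ((*v) (transpose X))" using assms(1) full_rank_injective[of "transpose X"] rank_transpose[of X] by simp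
  show ?thesis
    apply (subst gd_limit_eq[OF inj assms(3,4)])
    by (simp add: assms(2) matrix_vector_mul_assoc matrix_mul_assoc algebra_simps del: transpose_matrix_vector)
qed

theorem lemma1:
  fixes M :: nat and eta :: real
    and X :: "nat \<Rightarrow> real^'d^'n" and wstar :: "nat \<Rightarrow> real^'d"
    and z :: "nat \<Rightarrow> real^'n" and y :: "nat \<Rightarrow> real^'n"
    and w00 :: "real^'d" and K :: nat
  assumes "M \<ge> 1"
    and "CARD('d) > CARD('n)"
    and "\<And>i. i < M \<Longrightarrow> rank (X i) = CARD('n)"
    and "\<And>i. i < M \<Longrightarrow> y i = X i *v wstar i + z i"
    and "eta > 0"
    and "\<And>i w. i < M \<Longrightarrow> convergent (\<lambda>t. (gd_step eta (loss (X i) (y i)) ^^ t) w)"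
  shows "local_gd M eta X y w00 K =
     matpow (mat 1 - (1 / real M) *\<^sub>R (\<Sum>i<M. transpose (X i) ** matrix_inv (X i ** transpose (X i)) ** X i)) K *v w00
     + (\<Sum>k<K. matpow (mat 1 - (1 / real M) *\<^sub>R (\<Sum>i<M. transpose (X i) ** matrix_inv (X i ** transpose (X i)) ** X i)) k
          *v ((1 / real M) *\<^sub>R (\<Sum>i<M. (transpose (X i) ** matrix_inv (X i ** transpose (X i)) ** X i) *v wstar i)
              + (1 / real M) *\<^sub>R (\<Sum>i<M. (transpose (X i) ** matrix_inv (X i ** transpose (X i))) *v z i)))"
proof -
  define P where "P i = transpose (X i) ** matrix_inv (X i ** transpose (X i)) ** X i" for i
  define D where "D i = transpose (X i) ** matrix_inv (X i ** transpose (X i))" for i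
  define A where "A = mat 1 - (1 / real M) *\<^sub>R (\<Sum>i<M. P i)"
  define b where "b = (1 / real M) *\<^sub>R (\<Sum>i<M. P i *v wstar i) + (1 / real M) *\<^sub>R (\<Sum>i<M. D i *v z i)"
  have rec: "local_gd M eta X y w00 (Suc k) = A *v local_gd M eta X y w00 k + b" for k
  proof -
    let ?w = "local_gd M eta X y w00 k"
    have "local_gd M eta X y w00 (Suc k) = (1 / real M) *\<^sub>R (\<Sum>i<M. ?w - P i *v ?w + P i *v wstar i + D i *v z i)"
      using step_eq[OF assms(3,4,5,6)] by (simp add: P_def D_def)
    also have "\<dots> = (1 / real M) *\<^sub>R (real M *\<^sub>R ?w) - (1 / real M) *\<^sub>R (\<Sum>i<M. P i *v ?w) + b"
      by (simp add: b_def sum.distrib sum_subtractf algebra_simps sum_constant_scaleR del: sum_constant)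
    also have "\<dots> = A *v ?w + b"
      using assms(1) by (simp add: A_def matrix_vector_mult_diff_rdistrib sum_mv scaleR_matrix_vector_assoc[symmetric])
    finally show ?thesis .
  qed
  have "local_gd M eta X y w00 K = matpow A K *v w00 + (\<Sum>k<K. matpow A k *v b)"
  proof (induction K)
    case 0 show ?case by simp
  next
    case (Suc K)
    show ?case
      unfolding rec Suc
      by (simp del: local_gd.simps sum.lessThan_Suc add: mv_sum matrix_vector_right_distrib sum_distrib_left matrix_vector_mul_assoc sum.lessThan_Suc_shift)
  qed
  thus ?thesis by (simp add: A_def b_def P_def D_def)
qed
end
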